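(* Let $d\in(0,1]$ and $\kappa>0$, and let $L_d$, $E$ and $D(L_d)$ be as in the context. (Parabolic version) If $u\in C(\mathbb{R}^+,D(L_d))$ satisfies $u_t-L_d u\ge 0$ in $\mathbb{R}^+\times[0,1]^2$ and $u(0,x)=f(x)\ge 0$ for $x\in[0,1]^2$, then $u(t,x)\ge 0$ for all $t\ge0$, $x\in[0,1]^2$. (Elliptic version) If $u\in D(L_d)$ satisfies $-L_d u\ge 0$ in $[0,1]^2$, then $u(x)\ge 0$ for all $x\in[0,1]^2$.
   Context: Let $\mathcal D=[0,1]^2$, $M=\begin{pmatrix} d & -d\\ -1 & 1\end{pmatrix}$, and $$L_d u(x)=\frac{x_1(1-x_1)}{2}u_{x_1x_1}(x)+\frac{x_2(1-x_2)}{2d}u_{x_2x_2}(x)-\kappa\, Mx\cdot\nabla u(x).$$ Let $E=\{f\in C(\mathcal D): f(0,0)=f(1,1)=0\}$ with the sup norm. For $N$ with $N_2=dN$ an integer, let $N_1=N$, $\delta t=1/N$, $A=\mathrm{Id}-\frac{\kappa}{N}M$, and $$B_N(g)(x)=\sum_{j_1=0}^{N_1}\sum_{j_2=0}^{N_2}\binom{N_1}{j_1}\binom{N_2}{j_2}x_1^{j_1}(1-x_1)^{N_1-j_1}x_2^{j_2}(1-x_2)^{N_2-j_2}\,g\!\left(\tfrac{j_1}{N_1},\tfrac{j_2}{N_2}\right).$$ The domain is $D(L_d)=\{f\in E:\ (B_N(f\circ A)-f)/\delta t\to L_d f \text{ in } E \text{ as } N\to\infty\}$. In particular every $u\in D(L_d)$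 vanishes at $(0,0)$ and $(1,1)$; no condition is imposed on the rest of the boundary. *)

theory Defs
  imports Complex_Main
begin

definition Dsq :: "(real \<times> real) set" where
  "Dsq = {0..1} \<times> {0..1}"

text \<open>The space E = {f in C(D) : f(0,0) = f(1,1) = 0}. Functions are total on
  real x real; only their values on D matter.\<close>
definition Espace :: "(real \<times> real \<Rightarrow> real) set" where
  "Espace = {f. continuous_on Dsq f \<and> f (0,0) = 0 \<and> f (1,1) = 0}"

definition Mmap :: "real \<Rightarrow> real \<times> real \<Rightarrow> real \<times> real" where
  "Mmap d x = (d * fst x - d * snd x, - fst x + snd x)"

definition Amap :: "real \<Rightarrow> real \<Rightarrow> nat \<Rightarrow> real \<times> real \<Rightarrow> real \<times> real" where
  "Amap \<kappa> d N x = (fst x - (\<kappa> / real N) * fst (Mmap d x), snd x - (\<kappa> / real N) * snd (Mmap d x))"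

definition Bern :: "nat \<Rightarrow> nat \<Rightarrow> (real \<times> real \<Rightarrow> real) \<Rightarrow> real \<times> real \<Rightarrow> real" where
  "Bern N1 N2 g x = (\<Sum>j1\<in>{0..N1}. \<Sum>j2\<in>{0..N2}.
      real (N1 choose j1) * real (N2 choose j2)
      * fst x ^ j1 * (1 - fst x) ^ (N1 - j1) * snd x ^ j2 * (1 - snd x) ^ (N2 - j2)
      * g (real j1 / real N1, real j2 / real N2))"

definition admissible :: "real \<Rightarrow> nat \<Rightarrow> bool" where
  "admissible d N \<longleftrightarrow> N \<ge> 1 \<and> d * real N \<in> \<nat>"

definition gen_quot :: "real \<Rightarrow> real \<Rightarrow> (real \<times> real \<Rightarrow> real) \<Rightarrow> nat \<Rightarrow> real \<times> real \<Rightarrow> real" where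
  "gen_quot \<kappa> d f N x =
     (Bern N (nat (round (d * real N))) (f \<circ> Amap \<kappa> d N) x - f x) / (1 / real N)"

definition gen_conv :: "real \<Rightarrow> real \<Rightarrow> (real \<times> real \<Rightarrow> real) \<Rightarrow> (real \<times> real \<Rightarrow> real) \<Rightarrow> bool" where
  "gen_conv \<kappa> d f g \<longleftrightarrow>
     (\<forall>\<epsilon>>0. \<exists>N0. \<forall>N\<ge>N0. admissible d N \<longrightarrow> (\<forall>x\<in>Dsq. \<bar>gen_quot \<kappa> d f N x - g x\<bar> \<le> \<epsilon>))"

text \<open>D(L_d): f in E such that the quotients converge in E (admissible N must be
  unbounded for "N \<rightarrow> \<infinity>" to make sense).\<close>
definition DLd :: "real \<Rightarrow> real \<Rightarrow> (real \<times> real \<Rightarrow> real) set" where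
  "DLd \<kappa> d = {f. f \<in> Espace \<and> infinite {N. admissible d N} \<and> (\<exists>g\<in>Espace. gen_conv \<kappa> d f g)}"

definition Ld :: "real \<Rightarrow> real \<Rightarrow> (real \<times> real \<Rightarrow> real) \<Rightarrow> real \<times> real \<Rightarrow> real" where
  "Ld \<kappa> d f = (SOME g. g \<in> Espace \<and> gen_conv \<kappa> d f g)"

definition cont_E :: "(real \<Rightarrow> real \<times> real \<Rightarrow> real) \<Rightarrow> bool" where
  "cont_E u \<longleftrightarrow> (\<forall>t\<ge>0. \<forall>\<epsilon>>0. \<exists>\<delta>>0. \<forall>s\<ge>0. \<bar>s - t\<bar> < \<delta> \<longrightarrow>
       (\<forall>x\<in>Dsq. \<bar>u s x - u t x\<bar> \<le> \<epsilon>))"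

end

theory Submission
  imports Defs "HOL-Analysis.Weierstrass_Theorems"
begin


lemma bern1:
  assumes "n \<ge> 1"
  shows "(\<Sum>k\<le>n. Bernstein n k x * (c0 + c1 * (real k / real n) + c2 * (real k / real n)^2))
         = c0 + c1 * x + c2 * (x^2 + x * (1 - x) / real n)"
proof -
  have n: "real n > 0" using assms by simp
  have "\<And>k. Bernstein n k x * (c0 + c1 * (real k / real n) + c2 * (real k / real n)^2)
     = c0 * Bernstein n k x + (c1 / real n) * (real k * Bernstein n k x)
       + (c2 / (real n)^2) * (real k * (real k - 1) * Bernstein n k x)
       + (c2 / (real n)^2) * (real k * Bernstein n k x)"
    using n by (simp add: field_simps power2_eq_square)
  then have "(\<Sum>k\<le>n. Bernstein n k x * (c0 + c1 * (real k / real n) + c2 * (real k / real n)^2))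
     = (\<Sum>k\<le>n. c0 * Bernstein n k x + (c1 / real n) * (real k * Bernstein n k x)
       + (c2 / (real n)^2) * (real k * (real k - 1) * Bernstein n k x)
       + (c2 / (real n)^2) * (real k * Bernstein n k x))" by (intro sum.cong) auto
  also have "\<dots>
     = c0 * (\<Sum>k\<le>n. Bernstein n k x) + (c1 / real n) * (\<Sum>k\<le>n. real k * Bernstein n k x)
       + (c2 / (real n)^2) * (\<Sum>k\<le>n. real k * (real k - 1) * Bernstein n k x)
       + (c2 / (real n)^2) * (\<Sum>k\<le>n. real k * Bernstein n k x)"
    by (simp only: sum.distrib sum_distrib_left)
  also have "\<dots> = c0 + c1 * x + c2 * (x^2 + x * (1 - x) / real n)"
    unfolding sum_Bernstein sum_k_Bernstein sum_kk_Bernstein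
    using n by (simp add: field_simps power2_eq_square)
  finally show ?thesis .
qed

lemma Bern_alt: "Bern N1 N2 g x = (\<Sum>j1\<le>N1. \<Sum>j2\<le>N2. Bernstein N1 j1 (fst x) * Bernstein N2 j2 (snd x)
      * g (real j1 / real N1, real j2 / real N2))"
  unfolding Bern_def Bernstein_def atLeast0AtMost by (simp add: mult_ac)

lemma Bern_quad:
  assumes "N1 \<ge> 1" "N2 \<ge> 1"
  shows "Bern N1 N2 (\<lambda>y. a11 * (fst y)^2 + a12 * (fst y * snd y) + a22 * (snd y)^2) x
     = a11 * ((fst x)^2 + fst x * (1 - fst x) / real N1) + a12 * (fst x * snd x)
       + a22 * ((snd x)^2 + snd x * (1 - snd x) / real N2)"
proof -
  define u where "u j = real j / real N1" for j
  have inner: "(\<Sum>j2\<le>N2. Bernstein N1 j1 (fst x) * Bernstein N2 j2 (snd x)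
      * (a11 * (u j1)^2 + a12 * (u j1 * (real j2 / real N2)) + a22 * (real j2 / real N2)^2))
      = Bernstein N1 j1 (fst x) * ((a11 * (u j1)^2 + a22 * ((snd x)^2 + snd x * (1 - snd x) / real N2))
          + (a12 * snd x) * u j1)" for j1
  proof -
    have "(\<Sum>j2\<le>N2. Bernstein N1 j1 (fst x) * Bernstein N2 j2 (snd x)
      * (a11 * (u j1)^2 + a12 * (u j1 * (real j2 / real N2)) + a22 * (real j2 / real N2)^2))
      = Bernstein N1 j1 (fst x) * (\<Sum>j2\<le>N2. Bernstein N2 j2 (snd x) *
         (a11 * (u j1)^2 + (a12 * u j1) * (real j2 / real N2) + a22 * (real j2 / real N2)^2))"
      by (simp add: sum_distrib_left algebra_simps)
    also have "\<dots> = Bernstein N1 j1 (fst x) * (a11 * (u j1)^2 + (a12 * u j1) * snd x + a22 * ((snd x)^2 + snd x * (1 - snd x) / real N2))"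
      using bern1[OF assms(2)] by simp
    finally show ?thesis by (simp add: algebra_simps)
  qed
  have "Bern N1 N2 (\<lambda>y. a11 * (fst y)^2 + a12 * (fst y * snd y) + a22 * (snd y)^2) x
     = (\<Sum>j1\<le>N1. Bernstein N1 j1 (fst x) * ((a11 * (u j1)^2 + a22 * ((snd x)^2 + snd x * (1 - snd x) / real N2))
          + (a12 * snd x) * u j1))"
    unfolding Bern_alt using inner by (simp add: u_def)
  also have "\<dots> = (\<Sum>j1\<le>N1. Bernstein N1 j1 (fst x) * ((a22 * ((snd x)^2 + snd x * (1 - snd x) / real N2))
          + (a12 * snd x) * (real j1 / real N1) + a11 * (real j1 / real N1)^2))"
    by (simp add: u_def algebra_simps)
  also have "\<dots> = (a22 * ((snd x)^2 + snd x * (1 - snd x) / real N2)) + (a12 * snd x) * fst x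
     + a11 * ((fst x)^2 + fst x * (1 - fst x) / real N1)"
    by (rule bern1[OF assms(1)])
  finally show ?thesis by (simp add: algebra_simps)
qed

definition hq :: "real \<Rightarrow> real \<times> real \<Rightarrow> real" where
  "hq d z = -2 * (fst z)^2 - 2 * d * (2 + d) * (fst z * snd z) - d^2 * (1 + d) * (snd z)^2"

definition GG :: "real \<Rightarrow> real \<Rightarrow> real \<Rightarrow> real \<times> real \<Rightarrow> real" where
  "GG d \<kappa> t x = -2 * \<kappa> * d^2 * (fst x - snd x)^2 + \<kappa> * t * hq d (Mmap d x)
     + fst x * (1 - fst x) * hq d (1 - t * d, t) + (snd x * (1 - snd x) / d) * hq d (t * d, 1 - t)"

lemma adm_K: assumes "admissible d N" "0 < d"
  shows "real (nat (round (d * real N))) = d * real N" "nat (round (d * real N)) \<ge> 1" "N \<ge> 1"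
proof -
  from assms obtain m where m: "d * real N = real m" unfolding admissible_def Nats_def by auto
  then show "real (nat (round (d * real N))) = d * real N" by simp
  have "real N \<ge> 1" using assms unfolding admissible_def by simp
  then have "d * real N > 0" using assms by simp
  then show "nat (round (d * real N)) \<ge> 1" using m by simp
  show "N \<ge> 1" using assms unfolding admissible_def by simp
qed

lemma hq_A:
  fixes t :: real
  shows "hq d (fst y - t * (d * fst y - d * snd y), snd y - t * (- fst y + snd y))
    = hq d (1 - t * d, t) * (fst y)^2
      + (2 * (-2) * (1 - t*d) * (t*d) + (- 2 * d * (2 + d)) * ((1 - t*d) * (1 - t) + (t*d) * t)
         + 2 * (-(d^2) * (1 + d)) * t * (1 - t)) * (fst y * snd y)
      + hq d (t * d, 1 - t) * (snd y)^2"
  unfolding hq_def by simp algebra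

lemma hq_A2:
  fixes t :: real
  shows "hq d (fst y - t * (d * fst y - d * snd y), snd y - t * (- fst y + snd y))
    = hq d y - t * (2 * d^2 * (fst y - snd y)^2) + t^2 * hq d (Mmap d y)"
  unfolding hq_def Mmap_def by simp algebra

lemma alg1: fixes n d :: real assumes "n > 0" "d > 0"
  shows "n * (H - t * P + t^2 * Q - H + a * (X / n) + b * (Y / (d * n)))
     = - (t * n) * P + (t * n) * t * Q + a * X + b * Y / d"
  using assms by (simp add: field_simps power2_eq_square)

lemma alg2: fixes k :: real
  shows "- k * (2 * d^2 * D) + k * t * Q + a * X + b * Y / d = -2 * k * d^2 * D + k * t * Q + X * a + (Y / d) * b"
  by (simp add: algebra_simps)

lemma gen_quot_hq:
  assumes "admissible d N" "0 < d"
  shows "gen_quot \<kappa> d (hq d) N x = GG d \<kappa> (\<kappa> / real N) x"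
proof -
  note K = adm_K[OF assms]
  define t where "t = \<kappa> / real N"
  have N0: "real N > 0" using K(3) by simp
  define a11 where "a11 = hq d (1 - t * d, t)"
  define a22 where "a22 = hq d (t * d, 1 - t)"
  define a12 where "a12 = (2 * (-2) * (1 - t*d) * (t*d) + (- 2 * d * (2 + d)) * ((1 - t*d) * (1 - t) + (t*d) * t)
         + 2 * (-(d^2) * (1 + d)) * t * (1 - t))"
  have hA: "hq d (fst y - t * (d * fst y - d * snd y), snd y - t * (- fst y + snd y))
     = a11 * (fst y)^2 + a12 * (fst y * snd y) + a22 * (snd y)^2" for y
    unfolding a11_def a12_def a22_def by (rule hq_A)
  have fn_eq: "(hq d \<circ> Amap \<kappa> d N) = (\<lambda>y. a11 * (fst y)^2 + a12 * (fst y * snd y) + a22 * (snd y)^2)"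
    by (rule ext) (simp only: o_def Amap_def Mmap_def t_def[symmetric] hA fst_conv snd_conv)
  have "gen_quot \<kappa> d (hq d) N x = real N * (Bern N (nat (round (d * real N))) (hq d \<circ> Amap \<kappa> d N) x - hq d x)"
    unfolding gen_quot_def by simp
  also have "\<dots> = real N * ((a11 * (fst x)^2 + a12 * (fst x * snd x) + a22 * (snd x)^2) - hq d x
     + a11 * (fst x * (1 - fst x) / real N) + a22 * (snd x * (1 - snd x) / (d * real N)))"
    unfolding fn_eq Bern_quad[OF K(3) K(2)] K(1) by (simp add: algebra_simps)
  also have "\<dots> = real N * (hq d (fst x - t * (d * fst x - d * snd x), snd x - t * (- fst x + snd x)) - hq d x
     + a11 * (fst x * (1 - fst x) / real N) + a22 * (snd x * (1 - snd x) / (d * real N)))"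
    by (simp only: hA)
  also have "\<dots> = GG d \<kappa> t x"
  proof -
    have kt: "\<kappa> = t * real N" using N0 by (simp add: t_def)
    have "real N * (hq d x - t * (2 * d^2 * (fst x - snd x)^2) + t^2 * hq d (Mmap d x) - hq d x
     + a11 * (fst x * (1 - fst x) / real N) + a22 * (snd x * (1 - snd x) / (d * real N)))
     = - (t * real N) * (2 * d^2 * (fst x - snd x)^2) + (t * real N) * t * hq d (Mmap d x)
       + a11 * (fst x * (1 - fst x)) + a22 * (snd x * (1 - snd x)) / d"
      by (rule alg1[OF N0 assms(2)])
    then show ?thesis unfolding hq_A2 GG_def a11_def a22_def by (simp only: kt alg2)
  qed
  finally show ?thesis by (simp add: t_def)
qed

lemma GG_lim: assumes "0 < d" shows "(\<lambda>N. GG d \<kappa> (\<kappa> / real N) x) \<longlonglongrightarrow>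
   -2 * \<kappa> * d^2 * (fst x - snd x)^2 - 2 * fst x * (1 - fst x) - d * (1 + d) * snd x * (1 - snd x)"
proof -
  have "(\<lambda>N. GG d \<kappa> (\<kappa> / real N) x) \<longlonglongrightarrow> GG d \<kappa> 0 x"
    proof (rule isCont_tendsto_compose[where g="\<lambda>t. GG d \<kappa> t x"])
    show "isCont (\<lambda>t. GG d \<kappa> t x) 0" unfolding GG_def hq_def by (intro continuous_intros)
    show "(\<lambda>N. \<kappa> / real N) \<longlonglongrightarrow> 0" by (rule lim_const_over_n)
  qed
  moreover have "GG d \<kappa> 0 x = -2 * \<kappa> * d^2 * (fst x - snd x)^2 - 2 * fst x * (1 - fst x) - d * (1 + d) * snd x * (1 - snd x)"
  proof -
    have "hq d (1, 0) = -2" "hq d (0, 1) = -(d^2) * (1 + d)" unfolding hq_def by simp_all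
    then have "GG d \<kappa> 0 x = -2 * \<kappa> * d^2 * (fst x - snd x)^2 + fst x * (1 - fst x) * (-2)
       + (snd x * (1 - snd x) / d) * (-(d^2) * (1 + d))" unfolding GG_def by simp
    also have "-2 * \<kappa> * d^2 * (fst x - snd x)^2 + fst x * (1 - fst x) * (-2)
       + (snd x * (1 - snd x) / d) * (-(d^2) * (1 + d)) = -2 * \<kappa> * d^2 * (fst x - snd x)^2 - 2 * fst x * (1 - fst x) - d * (1 + d) * snd x * (1 - snd x)"
      using assms by (simp add: power2_eq_square field_simps)
    finally show ?thesis .
  qed
  ultimately show ?thesis by simp
qed



lemma Bern_lin: "Bern N1 N2 (\<lambda>y. f y + c * g y) x = Bern N1 N2 f x + c * Bern N1 N2 g x"
  unfolding Bern_def by (simp add: sum.distrib sum_distrib_left algebra_simps)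

lemma gen_quot_lin: "gen_quot \<kappa> d (\<lambda>y. f y + c * g y) N x = gen_quot \<kappa> d f N x + c * gen_quot \<kappa> d g N x"
  unfolding gen_quot_def o_def by (simp add: Bern_lin algebra_simps)

lemma Amap_in:
  assumes "y \<in> Dsq" "0 < d" "d \<le> 1" "0 < \<kappa>" "\<kappa> \<le> real N"
  shows "Amap \<kappa> d N y \<in> Dsq"
proof -
  define t where "t = \<kappa> / real N"
  have t: "0 \<le> t" "t \<le> 1" using assms by (auto simp: t_def)
  have td: "0 \<le> t * d" "t * d \<le> 1" using t assms by (auto simp: mult_le_one)
  obtain a b where y: "y = (a, b)" "0 \<le> a" "a \<le> 1" "0 \<le> b" "b \<le> 1" using assms(1) unfolding Dsq_def by auto
  have e1: "a - t * (d * a - d * b) = (1 - t*d) * a + (t*d) * b" by algebra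
  have e2: "b - t * (- a + b) = (1 - t) * b + t * a" by algebra
  have "0 \<le> (1 - t*d) * a + (t*d) * b" using td y by simp
  moreover have "(1 - t*d) * a + (t*d) * b \<le> 1"
    using convex_bound_le[of a 1 b "1 - t*d" "t*d"] td y by simp
  moreover have "0 \<le> (1 - t) * b + t * a" using t y by simp
  moreover have "(1 - t) * b + t * a \<le> 1"
    using convex_bound_le[of b 1 a "1 - t" "t"] t y by simp
  ultimately have "(a - t * (d * a - d * b), b - t * (- a + b)) \<in> Dsq"
    unfolding Dsq_def e1 e2 by simp
  then show ?thesis unfolding Amap_def Mmap_def y(1) t_def[symmetric] fst_conv snd_conv .
qed

lemma quot_nonneg_at_min:
  assumes "admissible d N" "0 < d" "d \<le> 1" "0 < \<kappa>" "\<kappa> \<le> real N"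
    and x0: "x0 \<in> Dsq" and mn: "\<And>y. y \<in> Dsq \<Longrightarrow> f x0 \<le> f y"
  shows "gen_quot \<kappa> d f N x0 \<ge> 0"
proof -
  define K where "K = nat (round (d * real N))"
  have x01: "0 \<le> fst x0" "fst x0 \<le> 1" "0 \<le> snd x0" "snd x0 \<le> 1" using x0 unfolding Dsq_def by auto
  have grid: "(real j1 / real N, real j2 / real K) \<in> Dsq" if "j1 \<le> N" "j2 \<le> K" for j1 j2
    using that unfolding Dsq_def by (auto simp: divide_le_eq_1)
  have "Bern N K (f \<circ> Amap \<kappa> d N) x0 \<ge> (\<Sum>j1\<le>N. \<Sum>j2\<le>K. Bernstein N j1 (fst x0) * Bernstein K j2 (snd x0) * f x0)"
    unfolding Bern_alt
  proof (intro sum_mono)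
    fix j1 j2 assume "j1 \<in> {..N}" "j2 \<in> {..K}"
    then have "f x0 \<le> (f \<circ> Amap \<kappa> d N) (real j1 / real N, real j2 / real K)"
      using mn Amap_in[OF grid assms(2-5)] by auto
    moreover have "0 \<le> Bernstein N j1 (fst x0) * Bernstein K j2 (snd x0)"
      using x01 by (simp add: Bernstein_nonneg)
    ultimately show "Bernstein N j1 (fst x0) * Bernstein K j2 (snd x0) * f x0
      \<le> Bernstein N j1 (fst x0) * Bernstein K j2 (snd x0) * (f \<circ> Amap \<kappa> d N) (real j1 / real N, real j2 / real K)"
      by (rule mult_left_mono)
  qed
  also have "(\<Sum>j1\<le>N. \<Sum>j2\<le>K. Bernstein N j1 (fst x0) * Bernstein K j2 (snd x0) * f x0) = f x0"
    by (simp add: sum_distrib_left[symmetric] sum_distrib_right[symmetric])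
  finally have "Bern N K (f \<circ> Amap \<kappa> d N) x0 - f x0 \<ge> 0" by (simp add: o_def)
  then show ?thesis unfolding gen_quot_def K_def by simp
qed

lemma Ld_spec:
  assumes "u \<in> DLd \<kappa> d"
  shows "Ld \<kappa> d u \<in> Espace" "gen_conv \<kappa> d u (Ld \<kappa> d u)"
proof -
  have "\<exists>g. g \<in> Espace \<and> gen_conv \<kappa> d u g" using assms unfolding DLd_def by auto
  then have "Ld \<kappa> d u \<in> Espace \<and> gen_conv \<kappa> d u (Ld \<kappa> d u)"
    unfolding Ld_def by (rule someI_ex)
  then show "Ld \<kappa> d u \<in> Espace" "gen_conv \<kappa> d u (Ld \<kappa> d u)" by auto
qed

lemma adm_big:
  assumes "u \<in> DLd \<kappa> d"
  shows "\<exists>N\<ge>M. admissible d N"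
proof -
  have "infinite {N. admissible d N}" using assms unfolding DLd_def by auto
  then show ?thesis unfolding infinite_nat_iff_unbounded_le by auto
qed

lemma Ld_nonneg_at_min:
  assumes "u \<in> DLd \<kappa> d" "0 < d" "d \<le> 1" "0 < \<kappa>"
    and x0: "x0 \<in> Dsq" and mn: "\<And>y. y \<in> Dsq \<Longrightarrow> u x0 \<le> u y"
  shows "Ld \<kappa> d u x0 \<ge> 0"
proof (rule ccontr)
  assume neg: "\<not> Ld \<kappa> d u x0 \<ge> 0"
  define e where "e = - Ld \<kappa> d u x0 / 2"
  have e: "e > 0" using neg by (simp add: e_def)
  obtain N0 where N0: "\<forall>N\<ge>N0. admissible d N \<longrightarrow> (\<forall>x\<in>Dsq. \<bar>gen_quot \<kappa> d u N x - Ld \<kappa> d u x\<bar> \<le> e)"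
    using Ld_spec(2)[OF assms(1)] e unfolding gen_conv_def by blast
  obtain N where N: "N \<ge> max N0 (nat \<lceil>\<kappa>\<rceil>)" "admissible d N" using adm_big[OF assms(1)] by blast
  have "\<kappa> \<le> real N" using N(1) by linarith
  then have "gen_quot \<kappa> d u N x0 \<ge> 0" using quot_nonneg_at_min[where f=u, OF N(2) assms(2-4) \<open>\<kappa> \<le> real N\<close> x0 mn] by simp
  moreover have "\<bar>gen_quot \<kappa> d u N x0 - Ld \<kappa> d u x0\<bar> \<le> e" using N0 N x0 by auto
  ultimately show False using e_def neg by linarith
qed



lemma cont_joint:
  assumes hu: "\<forall>t\<ge>0. u t \<in> DLd \<kappa> d" and cE: "cont_E u" and T: "T \<ge> 0"
  shows "continuous_on ({0..T} \<times> Dsq) (\<lambda>p. u (fst p) (snd p))"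
  unfolding continuous_on_iff
proof (intro ballI allI impI)
  fix p e assume p: "p \<in> {0..T} \<times> Dsq" and e: "(0::real) < e"
  obtain t y where pt: "p = (t, y)" "t \<ge> 0" "y \<in> Dsq" using p by auto
  have e3: "e/3 > 0" using e by simp
  obtain d1 where d1: "d1 > 0" "\<forall>s\<ge>0. \<bar>s - t\<bar> < d1 \<longrightarrow> (\<forall>x\<in>Dsq. \<bar>u s x - u t x\<bar> \<le> e/3)"
    using cE pt(2) e3 unfolding cont_E_def by blast
  have "continuous_on Dsq (u t)" using hu pt unfolding DLd_def Espace_def by auto
  then obtain d2 where d2: "d2 > 0" "\<forall>z\<in>Dsq. dist z y < d2 \<longrightarrow> dist (u t z) (u t y) < e/3"
    using pt(3) e3 unfolding continuous_on_iff by blast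
  show "\<exists>d>0. \<forall>x'\<in>{0..T} \<times> Dsq. dist x' p < d \<longrightarrow> dist (u (fst x') (snd x')) (u (fst p) (snd p)) < e"
  proof (intro exI[of _ "min d1 d2"] conjI ballI impI)
    show "min d1 d2 > 0" using d1 d2 by simp
    fix q assume q: "q \<in> {0..T} \<times> Dsq" and dq: "dist q p < min d1 d2"
    obtain s z where qs: "q = (s, z)" "s \<ge> 0" "z \<in> Dsq" using q by auto
    have "dist s t \<le> dist q p" using dist_fst_le[of q p] qs pt by simp
    then have "\<bar>s - t\<bar> < d1" using dq by (simp add: dist_real_def)
    then have a: "\<bar>u s z - u t z\<bar> \<le> e/3" using d1 qs by auto
    have "dist z y \<le> dist q p" using dist_snd_le[of q p] qs pt by simp
    then have b: "\<bar>u t z - u t y\<bar> < e/3" using d2 dq qs by (auto simp: dist_real_def)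
    show "dist (u (fst q) (snd q)) (u (fst p) (snd p)) < e"
      using a b qs pt e abs_triangle_ineq[of "u s z - u t z" "u t z - u t y"] by (simp add: dist_real_def)
  qed
qed

lemma parabolic:
  assumes d: "0 < d" "d \<le> 1" "0 < \<kappa>"
    and hu: "\<forall>t\<ge>0. u t \<in> DLd \<kappa> d" and cE: "cont_E u"
    and der: "\<forall>t>0. \<forall>x\<in>Dsq. (\<exists>ut. ((\<lambda>s. u s x) has_real_derivative ut) (at t)
                      \<and> ut - Ld \<kappa> d (u t) x \<ge> 0)"
    and init: "\<forall>x\<in>Dsq. u 0 x = f x \<and> f x \<ge> 0"
    and T: "T \<ge> 0" and x: "x \<in> Dsq"
  shows "u T x \<ge> 0"
proof (rule ccontr)
  assume neg: "\<not> u T x \<ge> 0"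
  have Tpos: "T > 0" using neg init x T by (cases "T = 0") auto
  define eps where "eps = - u T x / (2 * T)"
  have eps: "eps > 0" using neg Tpos by (simp add: eps_def divide_neg_pos)
  have epsT: "eps * T = - u T x / 2" using Tpos by (simp add: eps_def)
  define W where "W p = u (fst p) (snd p) + eps * fst p" for p
  define S where "S = {0..T} \<times> Dsq"
  have cW: "continuous_on S W"
    unfolding W_def S_def
    by (intro continuous_on_add cont_joint[OF hu cE T] continuous_on_mult continuous_on_const continuous_on_fst continuous_on_id)
  have cS: "compact S" unfolding S_def Dsq_def by (intro compact_Times compact_Icc)
  have ne: "S \<noteq> {}" using x T unfolding S_def by auto
  obtain p0 where p0: "p0 \<in> S" "\<forall>q\<in>S. W p0 \<le> W q"
    using continuous_attains_inf[OF cS ne cW] by blast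
  obtain t1 x1 where px: "p0 = (t1, x1)" by (cases p0)
  have t1: "0 \<le> t1" "t1 \<le> T" "x1 \<in> Dsq" using p0 px unfolding S_def by auto
  have "W p0 \<le> W (T, x)" using p0 x T unfolding S_def by auto
  then have Wneg: "W p0 < 0" using epsT neg unfolding W_def by simp
  have t1pos: "t1 > 0"
  proof (rule ccontr)
    assume "\<not> t1 > 0"
    then have "t1 = 0" using t1 by simp
    then show False using Wneg init t1 px unfolding W_def by auto
  qed
  have smin: "u t1 x1 \<le> u t1 y" if "y \<in> Dsq" for y
    using p0(2)[rule_format, of "(t1, y)"] that t1 px unfolding S_def W_def by auto
  have L0: "Ld \<kappa> d (u t1) x1 \<ge> 0"
    using Ld_nonneg_at_min[where u="u t1", OF _ d t1(3) smin] hu t1 by auto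
  obtain ut where ut: "((\<lambda>s. u s x1) has_real_derivative ut) (at t1)" "ut - Ld \<kappa> d (u t1) x1 \<ge> 0"
    using der t1pos t1 by blast
  have "((\<lambda>s. (u s x1 - u t1 x1) / (s - t1)) \<longlongrightarrow> ut) (at_left t1)"
    using has_field_derivative_at_within[OF ut(1), of "{..<t1}"]
    unfolding has_field_derivative_iff by simp
  moreover have "eventually (\<lambda>s. (u s x1 - u t1 x1) / (s - t1) \<le> - eps) (at_left t1)"
  proof -
    have "eventually (\<lambda>s. s \<in> {0<..<t1}) (at_left t1)" using eventually_at_left_real[OF t1pos] .
    then show ?thesis
    proof (rule eventually_mono)
      fix s assume s: "s \<in> {0<..<t1}"
      then have "(s, x1) \<in> S" using t1 unfolding S_def by auto
      then have "W p0 \<le> W (s, x1)" using p0 by auto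
      then have "u t1 x1 + eps * t1 \<le> u s x1 + eps * s" using px unfolding W_def by simp
      then have "- eps * (s - t1) \<le> u s x1 - u t1 x1" by (simp add: algebra_simps)
      moreover have "s - t1 < 0" using s by simp
      ultimately show "(u s x1 - u t1 x1) / (s - t1) \<le> - eps"
        by (simp add: divide_le_eq mult.commute)
    qed
  qed
  ultimately have "ut \<le> - eps"
    by (intro tendsto_upperbound) (auto simp: trivial_limit_at_left_real)
  then show False using ut(2) L0 eps by linarith
qed

lemma hq_nonpos: assumes "x \<in> Dsq" "0 < d" shows "hq d x \<le> 0"
proof -
  obtain a b where ab: "x = (a, b)" "0 \<le> a" "0 \<le> b" using assms unfolding Dsq_def by auto
  have "0 \<le> 2 * d * (2 + d) * (a * b)" using ab assms by simp
  moreover have "0 \<le> d^2 * (1 + d) * b^2" using assms by simp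
  moreover have "0 \<le> 2 * a^2" by simp
  moreover have "hq d x = -2 * a^2 - 2 * d * (2 + d) * (a * b) - d^2 * (1 + d) * b^2" unfolding hq_def ab by simp
  ultimately show ?thesis by linarith
qed

lemma Lh_neg:
  assumes "x \<in> Dsq" "0 < d" "0 < \<kappa>" "x \<noteq> (0,0)" "x \<noteq> (1,1)"
  shows "-2 * \<kappa> * d^2 * (fst x - snd x)^2 - 2 * fst x * (1 - fst x) - d * (1 + d) * snd x * (1 - snd x) < 0"
proof -
  obtain a b where ab: "x = (a, b)" "0 \<le> a" "a \<le> 1" "0 \<le> b" "b \<le> 1" using assms unfolding Dsq_def by auto
  have A: "0 \<le> 2 * \<kappa> * d^2 * (a - b)^2" using assms by simp
  have B: "0 \<le> 2 * a * (1 - a)" using ab by simp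
  have C: "0 \<le> d * (1 + d) * b * (1 - b)" using ab assms by (simp add: mult_nonneg_nonneg)
  show ?thesis
  proof (rule ccontr)
    assume "\<not> ?thesis"
    then have "\<not> (-2 * \<kappa> * d^2 * (a - b)^2 - 2 * a * (1 - a) - d * (1 + d) * b * (1 - b) < 0)" using ab by simp
    then have z: "2 * \<kappa> * d^2 * (a - b)^2 = 0" "2 * a * (1 - a) = 0" using A B C by linarith+
    from z(1) have "a = b" using assms by simp
    moreover from z(2) have "a = 0 \<or> a = 1" by simp
    ultimately show False using assms ab by auto
  qed
qed

lemma elliptic:
  assumes d: "0 < d" "d \<le> 1" "0 < \<kappa>"
    and hu: "u \<in> DLd \<kappa> d" and sup: "\<forall>x\<in>Dsq. - Ld \<kappa> d u x \<ge> 0"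
    and x: "x \<in> Dsq"
  shows "u x \<ge> 0"
proof -
  define c where "c = hq d (1, 1)"
  have c: "c < 0"
  proof -
    have "0 \<le> 2 * d * (2 + d)" "0 \<le> d^2 * (1 + d)" using d by simp_all
    moreover have "c = -2 - 2 * d * (2 + d) - d^2 * (1 + d)" unfolding c_def hq_def by simp
    ultimately show ?thesis by linarith
  qed
  have uE: "u \<in> Espace" using hu unfolding DLd_def by auto
  have key: "u x \<ge> eps * c" if eps: "eps > 0" for eps
  proof -
    define W where "W y = u y + eps * hq d y" for y
    have cW: "continuous_on Dsq W"
      unfolding W_def hq_def using uE unfolding Espace_def
      by (intro continuous_intros) auto
    have cS: "compact Dsq" unfolding Dsq_def by (intro compact_Times compact_Icc)
    have ne: "Dsq \<noteq> {}" using x by auto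
    obtain x0 where x0: "x0 \<in> Dsq" "\<forall>y\<in>Dsq. W x0 \<le> W y"
      using continuous_attains_inf[OF cS ne cW] by blast
    show ?thesis
    proof (cases "x0 = (0,0) \<or> x0 = (1,1)")
      case True
      then have "W x0 \<ge> eps * c"
      proof
        assume "x0 = (0,0)"
        then have "W x0 = 0" using uE unfolding W_def Espace_def hq_def by simp
        then show ?thesis using c eps mult_pos_neg[of eps c] by simp
      next
        assume "x0 = (1,1)"
        then show ?thesis using uE unfolding W_def Espace_def c_def by simp
      qed
      moreover have "W x0 \<le> W x" using x0 x by auto
      moreover have "eps * hq d x \<le> 0" using hq_nonpos[OF x d(1)] eps by (simp add: mult_pos_neg mult_nonneg_nonpos)
      ultimately show ?thesis unfolding W_def by linarith
    next
      case False
      define Lh where "Lh = -2 * \<kappa> * d^2 * (fst x0 - snd x0)^2 - 2 * fst x0 * (1 - fst x0) - d * (1 + d) * snd x0 * (1 - snd x0)"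
      have Lh: "Lh < 0" unfolding Lh_def using Lh_neg[OF x0(1) d(1) d(3)] False by auto
      have "eventually (\<lambda>N. GG d \<kappa> (\<kappa> / real N) x0 < Lh / 2) sequentially"
      proof -
        have "(\<lambda>N. GG d \<kappa> (\<kappa> / real N) x0) \<longlonglongrightarrow> Lh" using GG_lim[OF d(1), of \<kappa> x0] unfolding Lh_def .
        moreover have "Lh < Lh / 2" using Lh by simp
        ultimately show ?thesis by (rule order_tendstoD(2))
      qed
      then obtain N1 where N1: "\<forall>N\<ge>N1. GG d \<kappa> (\<kappa> / real N) x0 < Lh / 2"
        unfolding eventually_sequentially by blast
      define e where "e = - eps * Lh / 4"
      have e: "e > 0" using eps Lh by (simp add: e_def mult_pos_neg)
      obtain N0 where N0: "\<forall>N\<ge>N0. admissible d N \<longrightarrow> (\<forall>x\<in>Dsq. \<bar>gen_quot \<kappa> d u N x - Ld \<kappa> d u x\<bar> \<le> e)"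
        using Ld_spec(2)[OF hu] e unfolding gen_conv_def by blast
      obtain N where N: "N \<ge> max (max N0 N1) (nat \<lceil>\<kappa>\<rceil>)" "admissible d N" using adm_big[OF hu] by blast
      have kN: "\<kappa> \<le> real N" using N(1) by linarith
      have mn: "\<And>y. y \<in> Dsq \<Longrightarrow> W x0 \<le> W y" using x0 by auto
      have q0: "gen_quot \<kappa> d W N x0 \<ge> 0"
        using quot_nonneg_at_min[where f=W, OF N(2) d kN x0(1) mn] .
      have "W = (\<lambda>y. u y + eps * hq d y)" unfolding W_def by auto
      then have q1: "gen_quot \<kappa> d W N x0 = gen_quot \<kappa> d u N x0 + eps * GG d \<kappa> (\<kappa> / real N) x0"
        using gen_quot_lin gen_quot_hq[OF N(2) d(1)] by simp
      have "\<bar>gen_quot \<kappa> d u N x0 - Ld \<kappa> d u x0\<bar> \<le> e" using N0 N x0 by auto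
      moreover have "Ld \<kappa> d u x0 \<le> 0" using sup x0 by auto
      ultimately have q2: "gen_quot \<kappa> d u N x0 \<le> e" by linarith
      have m1: "eps * GG d \<kappa> (\<kappa> / real N) x0 < eps * (Lh / 2)"
        using N1 N(1) eps by (intro mult_strict_left_mono) auto
      have m2: "eps * Lh < 0" using eps Lh by (simp add: mult_pos_neg)
      have "e = - (eps * Lh) / 4" "eps * (Lh / 2) = (eps * Lh) / 2" unfolding e_def by simp_all
      then have False using q0 q1 q2 m1 m2 by linarith
      then show ?thesis ..
    qed
  qed
  show ?thesis
  proof (rule ccontr)
    assume neg: "\<not> u x \<ge> 0"
    define eps where "eps = u x / (2 * c)"
    have eps: "eps > 0" using neg c by (simp add: eps_def divide_neg_neg)
    have "eps * c = u x / 2" using c by (simp add: eps_def)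
    then show False using key[OF eps] neg by simp
  qed
qed

theorem theorem2:
  fixes d \<kappa> :: real
  assumes "0 < d" "d \<le> 1" "0 < \<kappa>"
  shows "(\<forall>(u :: real \<Rightarrow> real \<times> real \<Rightarrow> real) (f :: real \<times> real \<Rightarrow> real).
            (\<forall>t\<ge>0. u t \<in> DLd \<kappa> d) \<and> cont_E u
            \<and> (\<forall>t>0. \<forall>x\<in>Dsq. (\<exists>ut. ((\<lambda>s. u s x) has_real_derivative ut) (at t)
                      \<and> ut - Ld \<kappa> d (u t) x \<ge> 0))
            \<and> (\<forall>x\<in>Dsq. u 0 x = f x \<and> f x \<ge> 0)
            \<longrightarrow> (\<forall>t\<ge>0. \<forall>x\<in>Dsq. u t x \<ge> 0))
       \<and> (\<forall>u :: real \<times> real \<Rightarrow> real.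
            u \<in> DLd \<kappa> d \<and> (\<forall>x\<in>Dsq. - Ld \<kappa> d u x \<ge> 0)
            \<longrightarrow> (\<forall>x\<in>Dsq. u x \<ge> 0))"
  proof (rule conjI)
  show "\<forall>(u :: real \<Rightarrow> real \<times> real \<Rightarrow> real) (f :: real \<times> real \<Rightarrow> real).
            (\<forall>t\<ge>0. u t \<in> DLd \<kappa> d) \<and> cont_E u
            \<and> (\<forall>t>0. \<forall>x\<in>Dsq. (\<exists>ut. ((\<lambda>s. u s x) has_real_derivative ut) (at t)
                      \<and> ut - Ld \<kappa> d (u t) x \<ge> 0))
            \<and> (\<forall>x\<in>Dsq. u 0 x = f x \<and> f x \<ge> 0)
            \<longrightarrow> (\<forall>t\<ge>0. \<forall>x\<in>Dsq. u t x \<ge> 0)"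
  proof (intro allI impI ballI)
    fix u :: "real \<Rightarrow> real \<times> real \<Rightarrow> real" and f :: "real \<times> real \<Rightarrow> real" and t :: real and x
    assume h: "(\<forall>t\<ge>0. u t \<in> DLd \<kappa> d) \<and> cont_E u
            \<and> (\<forall>t>0. \<forall>x\<in>Dsq. (\<exists>ut. ((\<lambda>s. u s x) has_real_derivative ut) (at t)
                      \<and> ut - Ld \<kappa> d (u t) x \<ge> 0))
            \<and> (\<forall>x\<in>Dsq. u 0 x = f x \<and> f x \<ge> 0)" and t: "t \<ge> 0" and x: "x \<in> Dsq"
    show "u t x \<ge> 0"
      using parabolic[OF assms _ _ _ _ t x, of u f] h by blast
  qed
next
  show "\<forall>u :: real \<times> real \<Rightarrow> real.
            u \<in> DLd \<kappa> d \<and> (\<forall>x\<in>Dsq. - Ld \<kappa> d u x \<ge> 0)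
            \<longrightarrow> (\<forall>x\<in>Dsq. u x \<ge> 0)"
    using elliptic[OF assms] by blast
qed

end
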